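(* Let $(X,\tau)$ be a topological quandle and let $\{X_\alpha\}_{\alpha\in\Gamma}$ be its path components. Then each $X_\alpha$, with the subspace topology and the restricted operation, is a topological subquandle of $X$; in particular $x\triangleright y\in X_\alpha$ for all $x,y\in X_\alpha$.
   Context: A quandle is a set with a binary operation $\triangleright$ such that $x\triangleright x=x$, each $\beta_y(x)=x\triangleright y$ is bijective, and $(x\triangleright y)\triangleright z=(x\triangleright z)\triangleright(y\triangleright z)$. A topological quandle is a topological space with a continuous quandle operation $\triangleright:X\times X\to X$ such that every $\beta_y$ is a homeomorphism. A topological subquandle is a subset closed under $\triangleright$ which is a topological quandle with the subspace topology and the restricted operation. *)

theory Defs
  imports "HOL-Analysis.Analysis"
begin

definition quandle_on :: "'a set \<Rightarrow> ('a \<Rightarrow> 'a \<Rightarrow> 'a) \<Rightarrow> bool" where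
  "quandle_on Q op \<longleftrightarrow>
     (\<forall>x\<in>Q. \<forall>y\<in>Q. op x y \<in> Q) \<and>
     (\<forall>x\<in>Q. op x x = x) \<and>
     (\<forall>y\<in>Q. bij_betw (\<lambda>x. op x y) Q Q) \<and>
     (\<forall>x\<in>Q. \<forall>y\<in>Q. \<forall>z\<in>Q. op (op x y) z = op (op x z) (op y z))"

definition topological_quandle :: "'a topology \<Rightarrow> ('a \<Rightarrow> 'a \<Rightarrow> 'a) \<Rightarrow> bool" where
  "topological_quandle X op \<longleftrightarrow>
     quandle_on (topspace X) op \<and>
     continuous_map (prod_topology X X) X (\<lambda>(x, y). op x y) \<and>
     (\<forall>y\<in>topspace X. homeomorphic_map X X (\<lambda>x. op x y))"

definition topological_subquandle :: "'a topology \<Rightarrow> ('a \<Rightarrow> 'a \<Rightarrow> 'a) \<Rightarrow> 'a set \<Rightarrow> bool" where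
  "topological_subquandle X op S \<longleftrightarrow>
     S \<subseteq> topspace X \<and>
     (\<forall>x\<in>S. \<forall>y\<in>S. op x y \<in> S) \<and>
     topological_quandle (subtopology X S) op"

end

theory Submission
  imports Defs
begin

theorem mainTheorem14:
  fixes X :: "'a topology" and op :: "'a \<Rightarrow> 'a \<Rightarrow> 'a"
  assumes "topological_quandle X op"
  shows "\<forall>C \<in> path_components_of X.
           topological_subquandle X op C \<and> (\<forall>x\<in>C. \<forall>y\<in>C. op x y \<in> C)"
proof
  fix C assume "C \<in> path_components_of X"
  then obtain c where c: "c \<in> topspace X" and Cdef: "C = Collect (path_component_of X c)"
    unfolding path_components_of_def by auto
  have Q: "quandle_on (topspace X) op"
    and cont: "continuous_map (prod_topology X X) X (\<lambda>(x, y). op x y)"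
    and hom: "\<And>y. y \<in> topspace X \<Longrightarrow> homeomorphic_map X X (\<lambda>x. op x y)"
    using assms unfolding topological_quandle_def by auto
  have idem: "\<And>x. x \<in> topspace X \<Longrightarrow> op x x = x"
    and bij: "\<And>y. y \<in> topspace X \<Longrightarrow> bij_betw (\<lambda>x. op x y) (topspace X) (topspace X)"
    and dist: "\<And>x y z. x \<in> topspace X \<Longrightarrow> y \<in> topspace X \<Longrightarrow> z \<in> topspace X \<Longrightarrow>
                op (op x y) z = op (op x z) (op y z)"
    using Q unfolding quandle_on_def by blast+
  have CX: "C \<subseteq> topspace X" using Cdef path_component_of_subset_topspace by metis
  have Cx: "\<And>x. x \<in> C \<Longrightarrow> C = Collect (path_component_of X x)"
    using Cdef by (metis mem_Collect_eq path_component_of_equiv)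
  have closed: "\<forall>x\<in>C. \<forall>y\<in>C. op x y \<in> C"
  proof (intro ballI)
    fix x y assume x: "x \<in> C" and y: "y \<in> C"
    have xX: "x \<in> topspace X" using x CX by auto
    have pxy: "path_component_of X x y" using Cx[OF x] y by auto
    have cm: "continuous_map X X (\<lambda>w. op x w)"
    proof -
      have "continuous_map X (prod_topology X X) (\<lambda>w. (x, w))"
        using xX by (intro continuous_map_pairedI) auto
      from continuous_map_compose[OF this cont] show ?thesis by (simp add: o_def)
    qed
    have "path_component_of X (op x x) (op x y)"
      by (rule path_component_of_continuous_image[OF cm pxy])
    then show "op x y \<in> C" using idem[OF xX] Cx[OF x] by auto
  qed
  have img: "\<And>y. y \<in> C \<Longrightarrow> (\<lambda>x. op x y) ` C = C"
  proof -
    fix y assume y: "y \<in> C"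
    have yX: "y \<in> topspace X" using y CX by auto
    from homeomorphic_map_path_component_of[OF hom[OF yX] yX]
    show "(\<lambda>x. op x y) ` C = C" using idem[OF yX] Cx[OF y] by simp
  qed
  have qC: "quandle_on C op"
    unfolding quandle_on_def
  proof (intro conjI ballI)
    show "\<And>x y. x \<in> C \<Longrightarrow> y \<in> C \<Longrightarrow> op x y \<in> C" using closed by auto
    show "\<And>x. x \<in> C \<Longrightarrow> op x x = x" using idem CX by auto
    show "\<And>x y z. x \<in> C \<Longrightarrow> y \<in> C \<Longrightarrow> z \<in> C \<Longrightarrow> op (op x y) z = op (op x z) (op y z)"
      using dist CX by (meson subsetD)
    fix y assume y: "y \<in> C"
    have "inj_on (\<lambda>x. op x y) C"
      using inj_on_subset[OF bij_betw_imp_inj_on[OF bij] CX] y CX by blast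
    then show "bij_betw (\<lambda>x. op x y) C C" using img[OF y] by (simp add: bij_betw_def)
  qed
  have tsC: "topspace (subtopology X C) = C" using CX by auto
  have contC: "continuous_map (prod_topology (subtopology X C) (subtopology X C)) (subtopology X C) (\<lambda>(x, y). op x y)"
  proof -
    have "prod_topology (subtopology X C) (subtopology X C) = subtopology (prod_topology X X) (C \<times> C)"
      by (simp add: subtopology_Times)
    moreover have "continuous_map (subtopology (prod_topology X X) (C \<times> C)) X (\<lambda>(x, y). op x y)"
      using cont by (rule continuous_map_from_subtopology)
    ultimately show ?thesis
      using closed by (auto simp: continuous_map_in_subtopology)
  qed
  have homC: "\<forall>y\<in>topspace (subtopology X C). homeomorphic_map (subtopology X C) (subtopology X C) (\<lambda>x. op x y)"
  proof
    fix y assume "y \<in> topspace (subtopology X C)"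
    then have y: "y \<in> C" using tsC by simp
    have "(\<lambda>x. op x y) ` (topspace X \<inter> C) = topspace X \<inter> C"
      using img[OF y] CX by (simp add: Int_absorb1)
    then show "homeomorphic_map (subtopology X C) (subtopology X C) (\<lambda>x. op x y)"
      using homeomorphic_map_subtopologies[OF hom] y CX by auto
  qed
  show "topological_subquandle X op C \<and> (\<forall>x\<in>C. \<forall>y\<in>C. op x y \<in> C)"
    unfolding topological_subquandle_def topological_quandle_def
    using CX closed qC contC homC tsC by simp
qed

end
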